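(* Let $\mathscr{S}\subset\mathbb{T}^n$ be tropically convex. Then $\mathscr{S}$ is a projected tropical Metzler spectrahedron if and only if its homogenization $\mathscr{S}^h\subset\mathbb{T}^{n+1}$ is a projected tropical Metzler spectrahedron.
   Context: $\mathbb{T}=\mathbb{R}\cup\{-\infty\}$, $-\infty+a=-\infty$. Tropically convex: $\max(\lambda+x,\mu+y)\in X$ for $x,y\in X$, $\lambda,\mu\in\mathbb{T}$, $\max(\lambda,\mu)=0$. Homogenization: $\mathscr{S}^h=\{(x_0,x_0+x)\in\mathbb{T}^{n+1}: x_0\in\mathbb{T},\ x\in\mathscr{S}\}$, where $x_0+x$ has entries $x_0+x_k$. Signed tropical numbers $\mathbb{S}=(\{\pm1\}\times\mathbb{R})\cup\{(0,-\infty)\}$, $(1,a)$ positive, $(-1,a)$ negative, modulus $|(s,a)|=a$; a matrix over $\mathbb{S}$ is tropical Metzler if off-diagonal entries are negative or $(0,-\infty)$. For symmetric tropical Metzler $Q^{(0)},\dots,Q^{(N)}$, with $x_0:=0$, $x\in\mathbb{T}^N$: $Q^{+}_{ii}(x)=\max\{|Q^{(k)}_{ii}|+x_k: Q^{(k)}_{ii}\text{ positive}\}$, $Q^-_{ii}$ likewise with negative entries ($\max\emptyset=-\infty$), $Q_{ij}(x)=\max_k(|Q^{(k)}_{ij}|+x_k)$ ($i\ne j$); the tropical Metzler spectrahedron $\mathcal{S}(Q^{(0)}|Q^{(1)},\dots,Q^{(N)})=\{x\in\mathbb{T}^N: Q^+_{ii}(x)\ge Q^-_{ii}(x)\ \forall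 i,\ Q^+_{ii}(x)+Q^+_{jj}(x)\ge2Q_{ij}(x)\ \forall i\ne j\}$. A subset of $\mathbb{T}^d$ is a projected tropical Metzler spectrahedron if it is the image of a tropical Metzler spectrahedron in $\mathbb{T}^{d+d'}$ ($d'\ge0$) under projection onto the first $d$ coordinates. *)

theory Defs
  imports "HOL-Library.Extended_Real"
begin

text \<open>Tropical numbers T = R \<union> {-\<infinity>} are modelled as extended reals different from +\<infinity>.
  Points of T^n are lists of length n of such values.\<close>

definition trop :: "ereal \<Rightarrow> bool" where
  "trop a \<longleftrightarrow> a \<noteq> \<infinity>"

definition tspace :: "nat \<Rightarrow> ereal list set" where
  "tspace n = {x. length x = n \<and> (\<forall>a\<in>set x. trop a)}"

definition trop_convex :: "ereal list set \<Rightarrow> bool" where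
  "trop_convex X \<longleftrightarrow> (\<forall>x\<in>X. \<forall>y\<in>X. \<forall>l u. trop l \<and> trop u \<and> max l u = 0 \<longrightarrow>
      map2 (\<lambda>a b. max (l + a) (u + b)) x y \<in> X)"

definition homog :: "ereal list set \<Rightarrow> ereal list set" where
  "homog X = {x0 # map (\<lambda>a. x0 + a) x | x0 x. trop x0 \<and> x \<in> X}"

text \<open>Signed tropical numbers: pairs (sign, modulus), either sign \<plusminus>1 with real modulus,
  or (0, -\<infinity>).\<close>
type_synonym strop = "int \<times> ereal"

definition valid_strop :: "strop \<Rightarrow> bool" where
  "valid_strop q \<longleftrightarrow> (fst q \<in> {1, -1} \<and> snd q \<noteq> \<infinity> \<and> snd q \<noteq> -\<infinity>) \<or> q = (0, -\<infinity>)"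

text \<open>A family Q^(0),...,Q^(N) of symmetric tropical Metzler m\<times>m matrices over S;
  Q k i j is entry (i,j) of Q^(k), with indices i, j < m.\<close>
definition metzler_family :: "nat \<Rightarrow> nat \<Rightarrow> (nat \<Rightarrow> nat \<Rightarrow> nat \<Rightarrow> strop) \<Rightarrow> bool" where
  "metzler_family m N Q \<longleftrightarrow> (\<forall>k\<le>N. \<forall>i<m. \<forall>j<m.
      valid_strop (Q k i j) \<and> Q k i j = Q k j i \<and> (i \<noteq> j \<longrightarrow> fst (Q k i j) \<le> 0))"

definition xext :: "ereal list \<Rightarrow> nat \<Rightarrow> ereal" where
  "xext x k = (if k = 0 then 0 else x ! (k - 1))"

definition Qplus :: "nat \<Rightarrow> (nat \<Rightarrow> nat \<Rightarrow> nat \<Rightarrow> strop) \<Rightarrow> ereal list \<Rightarrow> nat \<Rightarrow> ereal" where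
  "Qplus N Q x i = Sup {snd (Q k i i) + xext x k | k. k \<le> N \<and> fst (Q k i i) = 1}"

definition Qminus :: "nat \<Rightarrow> (nat \<Rightarrow> nat \<Rightarrow> nat \<Rightarrow> strop) \<Rightarrow> ereal list \<Rightarrow> nat \<Rightarrow> ereal" where
  "Qminus N Q x i = Sup {snd (Q k i i) + xext x k | k. k \<le> N \<and> fst (Q k i i) = -1}"

definition Qoff :: "nat \<Rightarrow> (nat \<Rightarrow> nat \<Rightarrow> nat \<Rightarrow> strop) \<Rightarrow> ereal list \<Rightarrow> nat \<Rightarrow> nat \<Rightarrow> ereal" where
  "Qoff N Q x i j = Sup {snd (Q k i j) + xext x k | k. k \<le> N}"

definition metzler_spec :: "nat \<Rightarrow> nat \<Rightarrow> (nat \<Rightarrow> nat \<Rightarrow> nat \<Rightarrow> strop) \<Rightarrow> ereal list set" where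
  "metzler_spec m N Q = {x \<in> tspace N.
      (\<forall>i<m. Qplus N Q x i \<ge> Qminus N Q x i) \<and>
      (\<forall>i<m. \<forall>j<m. i \<noteq> j \<longrightarrow> Qplus N Q x i + Qplus N Q x j \<ge> 2 * Qoff N Q x i j)}"

definition proj_metzler_spec :: "nat \<Rightarrow> ereal list set \<Rightarrow> bool" where
  "proj_metzler_spec d X \<longleftrightarrow> (\<exists>d' m Q. metzler_family m (d + d') Q \<and>
      X = take d ` metzler_spec m (d + d') Q)"

end

theory Submission
  imports Defs
begin

definition Z :: strop where "Z = (0, -\<infinity>)"

definition G :: "nat \<Rightarrow> (nat \<Rightarrow> nat \<Rightarrow> nat \<Rightarrow> strop) \<Rightarrow> ereal list \<Rightarrow> nat \<Rightarrow> nat \<Rightarrow> (int \<Rightarrow> bool) \<Rightarrow> ereal" where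
  "G N Q x i j P = Sup {snd (Q k i j) + xext x k | k. k \<le> N \<and> P (fst (Q k i j))}"

lemma Qplus_G: "Qplus N Q x i = G N Q x i i (\<lambda>s. s = 1)" by (simp add: Qplus_def G_def)
lemma Qminus_G: "Qminus N Q x i = G N Q x i i (\<lambda>s. s = -1)" by (simp add: Qminus_def G_def)
lemma Qoff_G: "Qoff N Q x i j = G N Q x i j (\<lambda>s. True)" by (simp add: Qoff_def G_def)

lemma fin_setc: "finite {f k | k. k \<le> (N::nat) \<and> P k}"
  by (rule finite_subset[of _ "f ` {..N}"]) auto

lemma Sup_fin_in: "finite (A::ereal set) \<Longrightarrow> A \<noteq> {} \<Longrightarrow> Sup A \<in> A"
  by (rule finite_Sup_in) (auto simp: sup_max max_def)

lemma add_ninf: "(a::ereal) \<noteq> \<infinity> \<Longrightarrow> b \<noteq> \<infinity> \<Longrightarrow> a + b \<noteq> \<infinity>"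
  by (cases a; cases b) auto

lemma sup_shift:
  fixes A B :: "ereal set"
  assumes "finite A" "c \<noteq> \<infinity>" "\<forall>a\<in>A. a \<noteq> \<infinity>"
    "\<forall>b\<in>B. b = -\<infinity> \<or> (\<exists>a\<in>A. b = c + a)" "\<forall>a\<in>A. c + a \<in> B"
  shows "Sup B = c + Sup A"
proof (cases "A = {}")
  case True
  then have "B \<subseteq> {-\<infinity>}" using assms by auto
  then have "Sup B = -\<infinity>" by (metis Sup_le_iff antisym bot_ereal_def bot_least singletonD subset_iff)
  then show ?thesis using True assms(2) by (cases c) (auto simp: bot_ereal_def)
next
  case False
  have SA: "Sup A \<in> A" using Sup_fin_in[OF assms(1) False] .
  show ?thesis
  proof (rule antisym)
    show "Sup B \<le> c + Sup A"
    proof (rule Sup_least)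
      fix b assume "b \<in> B"
      then consider "b = -\<infinity>" | a where "a \<in> A" "b = c + a" using assms(4) by blast
      then show "b \<le> c + Sup A"
      proof cases
        case 2 then show ?thesis by (simp add: Sup_upper add_left_mono)
      qed simp
    qed
    show "c + Sup A \<le> Sup B" using SA assms(5) by (simp add: Sup_upper)
  qed
qed

lemma G_shift:
  assumes c: "c \<noteq> \<infinity>"
    and fin: "\<forall>k\<le>N. snd (Q k i j) \<noteq> \<infinity> \<and> xext x k \<noteq> \<infinity>"
    and fin': "\<forall>k'\<le>N'. xext x' k' \<noteq> \<infinity>"
    and T1: "\<forall>k\<le>N. \<exists>k'\<le>N'. Q' k' i' j' = Q k i j \<and> xext x' k' = c + xext x k"
    and T2: "\<forall>k'\<le>N'. Q' k' i' j' = Z \<or> (\<exists>k\<le>N. Q' k' i' j' = Q k i j \<and> xext x' k' = c + xext x k)"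
  shows "G N' Q' x' i' j' P = c + G N Q x i j P"
  unfolding G_def
proof (rule sup_shift[OF fin_setc c])
  show "\<forall>a\<in>{snd (Q k i j) + xext x k |k. k \<le> N \<and> P (fst (Q k i j))}. a \<noteq> \<infinity>"
    using fin by (auto intro!: add_ninf)
  show "\<forall>b\<in>{snd (Q' k i' j') + xext x' k |k. k \<le> N' \<and> P (fst (Q' k i' j'))}.
       b = - \<infinity> \<or> (\<exists>a\<in>{snd (Q k i j) + xext x k |k. k \<le> N \<and> P (fst (Q k i j))}. b = c + a)"
  proof
    fix b assume "b \<in> {snd (Q' k i' j') + xext x' k |k. k \<le> N' \<and> P (fst (Q' k i' j'))}"
    then obtain k' where k': "k' \<le> N'" "P (fst (Q' k' i' j'))" "b = snd (Q' k' i' j') + xext x' k'" by blast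
    from T2 k'(1) consider "Q' k' i' j' = Z" | k where "k \<le> N" "Q' k' i' j' = Q k i j" "xext x' k' = c + xext x k"
      by blast
    then show "b = - \<infinity> \<or> (\<exists>a\<in>{snd (Q k i j) + xext x k |k. k \<le> N \<and> P (fst (Q k i j))}. b = c + a)"
    proof cases
      case 1 then show ?thesis using k' fin' by (cases "xext x' k'") (auto simp: Z_def)
    next
      case 2
      then have "b = c + (snd (Q k i j) + xext x k)" using k' by (simp add: ac_simps)
      moreover have "snd (Q k i j) + xext x k \<in> {snd (Q k i j) + xext x k |k. k \<le> N \<and> P (fst (Q k i j))}"
        using 2 k' by auto
      ultimately show ?thesis by blast
    qed
  qed
  show "\<forall>a\<in>{snd (Q k i j) + xext x k |k. k \<le> N \<and> P (fst (Q k i j))}.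
       c + a \<in> {snd (Q' k i' j') + xext x' k |k. k \<le> N' \<and> P (fst (Q' k i' j'))}"
  proof
    fix a assume "a \<in> {snd (Q k i j) + xext x k |k. k \<le> N \<and> P (fst (Q k i j))}"
    then obtain k where k: "k \<le> N" "P (fst (Q k i j))" "a = snd (Q k i j) + xext x k" by blast
    then obtain k' where "k' \<le> N'" "Q' k' i' j' = Q k i j" "xext x' k' = c + xext x k" using T1 by blast
    then show "c + a \<in> {snd (Q' k i' j') + xext x' k |k. k \<le> N' \<and> P (fst (Q' k i' j'))}"
      using k by (auto simp: ac_simps intro!: exI[of _ k'])
  qed
qed

lemma minf_add: "y \<noteq> \<infinity> \<Longrightarrow> -\<infinity> + y = (-\<infinity>::ereal)"
  by (cases y) auto

lemma G_minf:
  assumes "\<forall>k\<le>N. P (fst (Q k i j)) \<longrightarrow> snd (Q k i j) + xext x k = -\<infinity>"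
  shows "G N Q x i j P = -\<infinity>"
  unfolding G_def
proof (rule antisym)
  show "Sup {snd (Q k i j) + xext x k | k. k \<le> N \<and> P (fst (Q k i j))} \<le> -\<infinity>"
  proof (rule Sup_least)
    fix b assume "b \<in> {snd (Q k i j) + xext x k | k. k \<le> N \<and> P (fst (Q k i j))}"
    then obtain k where k: "k \<le> N" "P (fst (Q k i j))" "b = snd (Q k i j) + xext x k" by blast
    then have "b = -\<infinity>" using assms by blast
    then show "b \<le> -\<infinity>" by simp
  qed
qed simp

lemma G_none:
  assumes "\<forall>k\<le>N. \<not> P (fst (Q k i j)) \<or> snd (Q k i j) = -\<infinity>"
    and "\<forall>k\<le>N. xext x k \<noteq> \<infinity>"
  shows "G N Q x i j P = -\<infinity>"
proof (rule G_minf, intro allI impI)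
  fix k assume k: "k \<le> N" "P (fst (Q k i j))"
  then have "snd (Q k i j) = -\<infinity>" using assms(1) by blast
  moreover have "xext x k \<noteq> \<infinity>" using assms(2) k by blast
  ultimately show "snd (Q k i j) + xext x k = -\<infinity>" by (simp add: minf_add)
qed

lemma G_single:
  assumes "k0 \<le> N" "P (fst (Q k0 i j))"
    and "\<forall>k\<le>N. k \<noteq> k0 \<longrightarrow> \<not> P (fst (Q k i j)) \<or> snd (Q k i j) = -\<infinity>"
    and "\<forall>k\<le>N. xext x k \<noteq> \<infinity>"
  shows "G N Q x i j P = snd (Q k0 i j) + xext x k0"
  unfolding G_def
proof (rule Sup_eqI)
  fix b assume "b \<in> {snd (Q k i j) + xext x k | k. k \<le> N \<and> P (fst (Q k i j))}"
  then obtain k where k: "k \<le> N" "P (fst (Q k i j))" "b = snd (Q k i j) + xext x k" by blast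
  show "b \<le> snd (Q k0 i j) + xext x k0"
  proof (cases "k = k0")
    case True then show ?thesis using k by simp
  next
    case False
    then have "snd (Q k i j) = -\<infinity>" using assms(3) k by blast
    moreover have "xext x k \<noteq> \<infinity>" using assms(4) k by blast
    ultimately show ?thesis using k by (simp add: minf_add)
  qed
next
  fix y assume "\<And>b. b \<in> {snd (Q k i j) + xext x k | k. k \<le> N \<and> P (fst (Q k i j))} \<Longrightarrow> b \<le> y"
  then show "snd (Q k0 i j) + xext x k0 \<le> y" using assms(1,2) by blast
qed

lemma xext_fin: "x \<in> tspace N \<Longrightarrow> k \<le> N \<Longrightarrow> xext x k \<noteq> \<infinity>"
  unfolding tspace_def xext_def trop_def
  by (auto dest!: bspec[where x="x ! (k - 1)"])

lemma tspaceD: "x \<in> tspace N \<Longrightarrow> length x = N \<and> (\<forall>a\<in>set x. a \<noteq> \<infinity>)"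
  unfolding tspace_def trop_def by auto

lemma fam_fin: "metzler_family m N Q \<Longrightarrow> k \<le> N \<Longrightarrow> i < m \<Longrightarrow> j < m \<Longrightarrow> snd (Q k i j) \<noteq> \<infinity>"
proof -
  assume "metzler_family m N Q" "k \<le> N" "i < m" "j < m"
  then have "valid_strop (Q k i j)" unfolding metzler_family_def by blast
  then show ?thesis unfolding valid_strop_def by auto
qed

lemma two_minf: "2 * (-\<infinity>::ereal) = -\<infinity>" by simp

definition sig :: "nat \<Rightarrow> nat \<Rightarrow> nat" where
  "sig N k = (if k = 0 then 0 else if k = N then 1 else k + 1)"

definition bwdQ :: "nat \<Rightarrow> nat \<Rightarrow> (nat \<Rightarrow> nat \<Rightarrow> nat \<Rightarrow> strop) \<Rightarrow> nat \<Rightarrow> nat \<Rightarrow> nat \<Rightarrow> strop" where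
  "bwdQ N m Q k i j = (if i < m \<and> j < m then Q (sig N k) i j
     else if i = m \<and> j = m then (if k = N then (1,0) else if k = 0 then (-1,0) else Z)
     else if i = m+1 \<and> j = m+1 then (if k = 0 then (1,0) else if k = N then (-1,0) else Z)
     else Z)"

lemma sig_le: "1 \<le> N \<Longrightarrow> k \<le> N \<Longrightarrow> sig N k \<le> N"
  unfolding sig_def by auto

lemma bwd_family:
  assumes "metzler_family m N Q" "1 \<le> N"
  shows "metzler_family (m+2) N (bwdQ N m Q)"
  using assms sig_le[OF assms(2)] unfolding metzler_family_def bwdQ_def
  by (auto simp: valid_strop_def Z_def)

lemma bwd_core:
  assumes fam: "metzler_family m N Q" and N1: "1 \<le> N" and xs: "x' \<in> tspace N"
  defines "u \<equiv> x' ! (N-1) # take (N-1) x'"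
  shows "x' \<in> metzler_spec (m+2) N (bwdQ N m Q) \<longleftrightarrow> u \<in> metzler_spec m N Q \<and> x' ! (N-1) = 0"
proof -
  have lx: "length x' = N" and fx: "\<forall>a\<in>set x'. a \<noteq> \<infinity>" using tspaceD[OF xs] by auto
  have us: "u \<in> tspace N" unfolding u_def tspace_def trop_def using lx fx N1
    by (auto dest: in_set_takeD)
  have xu: "xext u (sig N k) = xext x' k" if "k \<le> N" for k
    using that N1 lx unfolding u_def xext_def sig_def by (auto simp: nth_Cons')
  have fx': "\<forall>k\<le>N. xext x' k \<noteq> \<infinity>" using xext_fin[OF xs] by auto
  have fu: "\<forall>k\<le>N. xext u k \<noteq> \<infinity>" using xext_fin[OF us] by auto
  have GG: "G N (bwdQ N m Q) x' i j P = G N Q u i j P" if "i < m" "j < m" for i j P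
  proof -
    have "G N (bwdQ N m Q) x' i j P = 0 + G N Q u i j P"
    proof (rule G_shift)
      show "\<forall>k\<le>N. snd (Q k i j) \<noteq> \<infinity> \<and> xext u k \<noteq> \<infinity>" using fam_fin[OF fam] that fu by auto
      show "\<forall>k\<le>N. \<exists>k'\<le>N. bwdQ N m Q k' i j = Q k i j \<and> xext x' k' = 0 + xext u k"
      proof (intro allI impI)
        fix k assume k: "k \<le> N"
        define k' where "k' = (if k = 0 then 0 else if k = 1 then N else k - 1)"
        have "sig N k' = k" using k N1 unfolding k'_def sig_def by auto
        moreover have "k' \<le> N" using k unfolding k'_def by auto
        ultimately show "\<exists>k'\<le>N. bwdQ N m Q k' i j = Q k i j \<and> xext x' k' = 0 + xext u k"
          using xu[of k'] that by (auto simp: bwdQ_def)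
      qed
      show "\<forall>k'\<le>N. bwdQ N m Q k' i j = Z \<or> (\<exists>k\<le>N. bwdQ N m Q k' i j = Q k i j \<and> xext x' k' = 0 + xext u k)"
      proof (intro allI impI disjI2)
        fix k' assume "k' \<le> N"
        then show "\<exists>k\<le>N. bwdQ N m Q k' i j = Q k i j \<and> xext x' k' = 0 + xext u k"
          using xu that sig_le[OF N1] by (intro exI[of _ "sig N k'"]) (auto simp: bwdQ_def)
      qed
    qed (use fx' in auto)
    then show ?thesis by simp
  qed
  have Om: "Qoff N (bwdQ N m Q) x' i j = -\<infinity>" if "i \<noteq> j" "\<not> (i < m \<and> j < m)" for i j
    unfolding Qoff_G by (rule G_minf) (use that fx' in \<open>auto simp: bwdQ_def Z_def\<close>)
  have P1: "Qplus N (bwdQ N m Q) x' m = x' ! (N-1)"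
  proof -
    have "Qplus N (bwdQ N m Q) x' m = snd (bwdQ N m Q N m m) + xext x' N"
      unfolding Qplus_G by (rule G_single) (use fx' N1 in \<open>auto simp: bwdQ_def Z_def\<close>)
    then show ?thesis using N1 by (simp add: bwdQ_def xext_def)
  qed
  have M1: "Qminus N (bwdQ N m Q) x' m = 0"
  proof -
    have "Qminus N (bwdQ N m Q) x' m = snd (bwdQ N m Q 0 m m) + xext x' 0"
      unfolding Qminus_G by (rule G_single) (use fx' N1 in \<open>auto simp: bwdQ_def Z_def\<close>)
    then show ?thesis using N1 by (simp add: bwdQ_def xext_def)
  qed
  have P2: "Qplus N (bwdQ N m Q) x' (m+1) = 0"
  proof -
    have "Qplus N (bwdQ N m Q) x' (m+1) = snd (bwdQ N m Q 0 (m+1) (m+1)) + xext x' 0"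
      unfolding Qplus_G by (rule G_single) (use fx' N1 in \<open>auto simp: bwdQ_def Z_def\<close>)
    then show ?thesis using N1 by (simp add: bwdQ_def xext_def)
  qed
  have M2: "Qminus N (bwdQ N m Q) x' (m+1) = x' ! (N-1)"
  proof -
    have "Qminus N (bwdQ N m Q) x' (m+1) = snd (bwdQ N m Q N (m+1) (m+1)) + xext x' N"
      unfolding Qminus_G by (rule G_single) (use fx' N1 in \<open>auto simp: bwdQ_def Z_def\<close>)
    then show ?thesis using N1 by (simp add: bwdQ_def xext_def)
  qed
  have D: "Qplus N (bwdQ N m Q) x' i = Qplus N Q u i" "Qminus N (bwdQ N m Q) x' i = Qminus N Q u i"
    if "i < m" for i using GG[OF that that] by (simp_all add: Qplus_G Qminus_G)
  have O: "Qoff N (bwdQ N m Q) x' i j = Qoff N Q u i j" if "i < m" "j < m" for i j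
    using GG[OF that] by (simp add: Qoff_G)
  show ?thesis
  proof
    assume L: "x' \<in> metzler_spec (m+2) N (bwdQ N m Q)"
    then have L1: "\<forall>i<m+2. Qminus N (bwdQ N m Q) x' i \<le> Qplus N (bwdQ N m Q) x' i"
      and L2: "\<forall>i<m+2. \<forall>j<m+2. i \<noteq> j \<longrightarrow> 2 * Qoff N (bwdQ N m Q) x' i j \<le> Qplus N (bwdQ N m Q) x' i + Qplus N (bwdQ N m Q) x' j"
      unfolding metzler_spec_def by auto
    have A1: "\<forall>i<m. Qminus N Q u i \<le> Qplus N Q u i"
    proof (intro allI impI)
      fix i assume "i < m" then show "Qminus N Q u i \<le> Qplus N Q u i"
        using L1[rule_format, of i] D[of i] by simp
    qed
    have A2: "\<forall>i<m. \<forall>j<m. i \<noteq> j \<longrightarrow> 2 * Qoff N Q u i j \<le> Qplus N Q u i + Qplus N Q u j"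
    proof (intro allI impI)
      fix i j assume "i < m" "j < m" "i \<noteq> j" then show "2 * Qoff N Q u i j \<le> Qplus N Q u i + Qplus N Q u j"
        using L2[rule_format, of i j] D[of i] D[of j] O[of i j] by simp
    qed
    have "u \<in> metzler_spec m N Q"
      unfolding metzler_spec_def using us A1 A2 by auto
    moreover have "x' ! (N-1) = 0"
      using L1[rule_format, of m] L1[rule_format, of "m+1"] P1 M1 P2 M2 by auto
    ultimately show "u \<in> metzler_spec m N Q \<and> x' ! (N-1) = 0" by simp
  next
    assume R: "u \<in> metzler_spec m N Q \<and> x' ! (N-1) = 0"
    then have R1: "\<forall>i<m. Qminus N Q u i \<le> Qplus N Q u i"
      and R2: "\<forall>i<m. \<forall>j<m. i \<noteq> j \<longrightarrow> 2 * Qoff N Q u i j \<le> Qplus N Q u i + Qplus N Q u j"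
      and z: "x' ! (N-1) = 0"
      unfolding metzler_spec_def by auto
    have "\<forall>i<m+2. Qminus N (bwdQ N m Q) x' i \<le> Qplus N (bwdQ N m Q) x' i"
    proof (intro allI impI)
      fix i assume "i < m+2"
      then consider "i < m" | "i = m" | "i = m+1" by arith
      then show "Qminus N (bwdQ N m Q) x' i \<le> Qplus N (bwdQ N m Q) x' i"
        by cases (use R1 D P1 M1 P2 M2 z in auto)
    qed
    moreover have "\<forall>i<m+2. \<forall>j<m+2. i \<noteq> j \<longrightarrow> 2 * Qoff N (bwdQ N m Q) x' i j \<le> Qplus N (bwdQ N m Q) x' i + Qplus N (bwdQ N m Q) x' j"
    proof (intro allI impI)
      fix i j assume "i < m+2" "j < m+2" "i \<noteq> j"
      then show "2 * Qoff N (bwdQ N m Q) x' i j \<le> Qplus N (bwdQ N m Q) x' i + Qplus N (bwdQ N m Q) x' j"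
        using R2 D O Om by (cases "i < m \<and> j < m") auto
    qed
    ultimately show "x' \<in> metzler_spec (m+2) N (bwdQ N m Q)"
      unfolding metzler_spec_def using xs by auto
  qed
qed

lemma map_plus0: "map ((+) (0::ereal)) x = x" by (induct x) auto

lemma homog_zero: "(0 # s \<in> homog S) \<longleftrightarrow> s \<in> S"
  unfolding homog_def trop_def by (auto simp: map_plus0)

lemma bwd_thm:
  assumes fam: "metzler_family m (n+1+d') Q"
    and H: "homog S = take (n+1) ` metzler_spec m (n+1+d') Q"
  shows "proj_metzler_spec n S"
proof -
  define N where "N = n+1+d'"
  have N1: "1 \<le> N" and nN: "n + (d'+1) = N" unfolding N_def by auto
  have fam': "metzler_family m N Q" using fam unfolding N_def .
  have H': "homog S = take (n+1) ` metzler_spec m N Q" using H unfolding N_def .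
  have "S = take n ` metzler_spec (m+2) N (bwdQ N m Q)"
  proof
    show "S \<subseteq> take n ` metzler_spec (m+2) N (bwdQ N m Q)"
    proof
      fix s assume "s \<in> S"
      then have "0 # s \<in> homog S" by (simp add: homog_zero)
      then obtain u where u: "u \<in> metzler_spec m N Q" "take (n+1) u = 0 # s" using H' by auto
      have ut: "u \<in> tspace N" using u(1) unfolding metzler_spec_def by auto
      then have lu: "length u = N" and fu: "\<forall>a\<in>set u. a \<noteq> \<infinity>" using tspaceD by auto
      define x' where "x' = tl u @ [u ! 0]"
      have u0: "u ! 0 = 0" using u(2) N1 lu
        by (metis Suc_eq_plus1 nth_Cons_0 nth_take zero_less_Suc)
      have xt: "x' \<in> tspace N" unfolding x'_def tspace_def trop_def using lu fu N1
        by (cases u) (auto simp: nth_mem)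
      have xl: "x' ! (N-1) = 0" unfolding x'_def using lu N1 u0 by (simp add: nth_append)
      have "x' ! (N-1) # take (N-1) x' = u"
        unfolding x'_def using lu N1 u0
        by (cases u) (auto simp: nth_append)
      then have "x' \<in> metzler_spec (m+2) N (bwdQ N m Q)"
        using bwd_core[OF fam' N1 xt] u(1) xl by simp
      moreover have "take n x' = s"
      proof -
        have "take n x' = take n (tl u)" unfolding x'_def using lu N1 N_def by simp
        also have "\<dots> = tl (take (n+1) u)" by (simp add: drop_take[symmetric] tl_drop take_Suc tl_take)
        also have "\<dots> = s" using u(2) by simp
        finally show ?thesis .
      qed
      ultimately show "s \<in> take n ` metzler_spec (m+2) N (bwdQ N m Q)" by force
    qed
    show "take n ` metzler_spec (m+2) N (bwdQ N m Q) \<subseteq> S"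
    proof
      fix s assume "s \<in> take n ` metzler_spec (m+2) N (bwdQ N m Q)"
      then obtain x' where x': "x' \<in> metzler_spec (m+2) N (bwdQ N m Q)" "s = take n x'" by auto
      have xt: "x' \<in> tspace N" using x'(1) unfolding metzler_spec_def by auto
      then have lx: "length x' = N" using tspaceD by auto
      have uA: "x' ! (N-1) # take (N-1) x' \<in> metzler_spec m N Q" and "x' ! (N-1) = 0"
        using bwd_core[OF fam' N1 xt] x'(1) by auto
      from uA have "take (n+1) (x' ! (N-1) # take (N-1) x') \<in> homog S" unfolding H' by (rule imageI)
      moreover have "take (n+1) (x' ! (N-1) # take (N-1) x') = 0 # s"
        using \<open>x' ! (N-1) = 0\<close> x'(2) N_def by (simp add: min_def)
      ultimately show "s \<in> S" by (simp add: homog_zero)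
    qed
  qed
  then show ?thesis unfolding proj_metzler_spec_def
    using bwd_family[OF fam' N1] nN by (intro exI[of _ "d'+1"] exI[of _ "m+2"] exI[of _ "bwdQ N m Q"]) simp
qed

definition tblk :: "nat \<Rightarrow> nat \<Rightarrow> nat \<Rightarrow> nat \<Rightarrow> strop" where
  "tblk N a b k = (if a div 2 = b div 2 then
     (if a = b then (if even a then (if k = 1 then (1,0) else Z) else (if k = N+2+a div 2 then (1,0) else Z))
      else (if k = a div 2 + 2 then (-1,0) else Z)) else Z)"

definition fwdQ :: "nat \<Rightarrow> nat \<Rightarrow> (nat \<Rightarrow> nat \<Rightarrow> nat \<Rightarrow> strop) \<Rightarrow> nat \<Rightarrow> nat \<Rightarrow> nat \<Rightarrow> strop" where
  "fwdQ N m Q k i j = (if i < m \<and> j < m then (if 1 \<le> k \<and> k \<le> N+1 then Q (k-1) i j else Z)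
     else if m \<le> i \<and> m \<le> j then tblk N (i-m) (j-m) k else Z)"

lemma tblk_valid: "valid_strop (tblk N a b k)"
  unfolding tblk_def by (simp add: valid_strop_def Z_def)

lemma tblk_sym: "tblk N a b k = tblk N b a k"
  unfolding tblk_def by (simp add: eq_commute)

lemma tblk_off: "a \<noteq> b \<Longrightarrow> fst (tblk N a b k) \<le> 0"
  unfolding tblk_def by (simp add: Z_def)

lemma fwd_family:
  assumes "metzler_family m N Q"
  shows "metzler_family (m+2*n) (N+1+n) (fwdQ N m Q)"
proof -
  have "valid_strop (fwdQ N m Q k i j) \<and> fwdQ N m Q k i j = fwdQ N m Q k j i \<and> (i \<noteq> j \<longrightarrow> fst (fwdQ N m Q k i j) \<le> 0)"
    if "k \<le> N+1+n" "i < m+2*n" "j < m+2*n" for k i j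
  proof (cases "i < m \<and> j < m")
    case T: True
    show ?thesis
    proof (cases "1 \<le> k \<and> k \<le> N+1")
      case True
      then have "k-1 \<le> N" by auto
      with assms T have v: "valid_strop (Q (k-1) i j)" and s: "Q (k-1) i j = Q (k-1) j i"
        and o: "i \<noteq> j \<longrightarrow> fst (Q (k-1) i j) \<le> 0"
        unfolding metzler_family_def by blast+
      have e1: "fwdQ N m Q k i j = Q (k-1) i j" using T True by (simp add: fwdQ_def)
      have e2: "fwdQ N m Q k j i = Q (k-1) j i" using T True by (simp add: fwdQ_def)
      show ?thesis unfolding e1 e2 using v s o by simp
    next
      case False
      then have e1: "fwdQ N m Q k i j = Z" and e2: "fwdQ N m Q k j i = Z" using T unfolding fwdQ_def by auto
      show ?thesis unfolding e1 e2 by (simp add: valid_strop_def Z_def)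
    qed
  next
    case F: False
    show ?thesis
    proof (cases "m \<le> i \<and> m \<le> j")
      case True
      then have e1: "fwdQ N m Q k i j = tblk N (i-m) (j-m) k" and e2: "fwdQ N m Q k j i = tblk N (j-m) (i-m) k"
        using F by (simp_all add: fwdQ_def)
      have "i \<noteq> j \<Longrightarrow> i - m \<noteq> j - m" using True by auto
      then show ?thesis unfolding e1 e2 using tblk_valid tblk_sym tblk_off by metis
    next
      case False
      then have e1: "fwdQ N m Q k i j = Z" and e2: "fwdQ N m Q k j i = Z" using F by (auto simp: fwdQ_def)
      show ?thesis unfolding e1 e2 by (simp add: valid_strop_def Z_def)
    qed
  qed
  then show ?thesis unfolding metzler_family_def by blast
qed

lemma fwd_spec:
  assumes fam: "metzler_family m N Q" and xs: "x' \<in> tspace (N+1+n)"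
  shows "x' \<in> metzler_spec (m+2*n) (N+1+n) (fwdQ N m Q) \<longleftrightarrow>
    (\<forall>i<m. Qminus (N+1+n) (fwdQ N m Q) x' i \<le> Qplus (N+1+n) (fwdQ N m Q) x' i) \<and>
    (\<forall>i<m. \<forall>j<m. i \<noteq> j \<longrightarrow> 2 * Qoff (N+1+n) (fwdQ N m Q) x' i j \<le> Qplus (N+1+n) (fwdQ N m Q) x' i + Qplus (N+1+n) (fwdQ N m Q) x' j) \<and>
    (\<forall>c<n. 2 * x' ! (c+1) \<le> x' ! 0 + x' ! (N+1+c))"
proof -
  define N' where "N' = N+1+n"
  define Q' where "Q' = fwdQ N m Q"
  have fx': "\<forall>k\<le>N'. xext x' k \<noteq> \<infinity>" using xext_fin xs unfolding N'_def by auto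
  have TP: "Qplus N' Q' x' (m+a) = (if even a then x' ! 0 else x' ! (N+1+a div 2))" if "a < 2*n" for a
  proof (cases "even a")
    case True
    have "Qplus N' Q' x' (m+a) = snd (Q' 1 (m+a) (m+a)) + xext x' 1"
      unfolding Qplus_G by (rule G_single) (use True fx' that in \<open>auto simp: Q'_def N'_def fwdQ_def tblk_def Z_def\<close>)
    then show ?thesis using True by (simp add: Q'_def fwdQ_def tblk_def xext_def)
  next
    case False
    have "Qplus N' Q' x' (m+a) = snd (Q' (N+2+a div 2) (m+a) (m+a)) + xext x' (N+2+a div 2)"
      unfolding Qplus_G by (rule G_single) (use False fx' that in \<open>auto simp: Q'_def N'_def fwdQ_def tblk_def Z_def\<close>)
    then show ?thesis using False by (simp add: Q'_def fwdQ_def tblk_def xext_def)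
  qed
  have TM: "Qminus N' Q' x' (m+a) = -\<infinity>" for a
    unfolding Qminus_G by (rule G_none) (use fx' in \<open>auto simp: Q'_def fwdQ_def tblk_def Z_def\<close>)
  have TO: "Qoff N' Q' x' (m+a) (m+b) = (if a div 2 = b div 2 then x' ! (a div 2 + 1) else -\<infinity>)"
    if "a < 2*n" "b < 2*n" "a \<noteq> b" for a b
  proof (cases "a div 2 = b div 2")
    case True
    have "Qoff N' Q' x' (m+a) (m+b) = snd (Q' (a div 2 + 2) (m+a) (m+b)) + xext x' (a div 2 + 2)"
      unfolding Qoff_G by (rule G_single) (use True fx' that in \<open>auto simp: Q'_def N'_def fwdQ_def tblk_def Z_def\<close>)
    then show ?thesis using True that by (simp add: Q'_def fwdQ_def tblk_def xext_def)
  next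
    case False
    show ?thesis unfolding Qoff_G using False
      by (simp, intro G_none) (use fx' in \<open>auto simp: Q'_def fwdQ_def tblk_def Z_def\<close>)
  qed
  have TC: "Qoff N' Q' x' i j = -\<infinity>" if "i < m \<and> \<not> j < m \<or> \<not> i < m \<and> j < m" for i j
    unfolding Qoff_G by (rule G_none) (use fx' that in \<open>auto simp: Q'_def fwdQ_def tblk_def Z_def\<close>)
  have TT: "2 * Qoff N' Q' x' i j \<le> Qplus N' Q' x' i + Qplus N' Q' x' j"
    if tc: "\<forall>c<n. 2 * x' ! (c+1) \<le> x' ! 0 + x' ! (N+1+c)"
      and ij: "i < m+2*n" "j < m+2*n" "i \<noteq> j" "\<not> (i < m \<and> j < m)" for i j
  proof (cases "i < m \<or> j < m")
    case True
    then show ?thesis using TC[of i j] ij by auto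
  next
    case False
    define a where "a = i - m"
    define b where "b = j - m"
    have i: "i = m + a" and j: "j = m + b" and ab: "a < 2*n" "b < 2*n" "a \<noteq> b"
      using False ij unfolding a_def b_def by auto
    show ?thesis
    proof (cases "a div 2 = b div 2")
      case False
      then show ?thesis unfolding i j using TO[OF ab] by simp
    next
      case True
      have c: "a div 2 < n" using ab by auto
      have "even a \<and> odd b \<or> odd a \<and> even b" using True ab by presburger
      then show ?thesis unfolding i j using TO[OF ab] TP[OF ab(1)] TP[OF ab(2)] True tc c
        by (auto simp: add.commute)
    qed
  qed
  show ?thesis unfolding N'_def[symmetric] Q'_def[symmetric]
  proof
    assume L: "x' \<in> metzler_spec (m+2*n) N' Q'"
    then have L1: "\<forall>i<m+2*n. Qminus N' Q' x' i \<le> Qplus N' Q' x' i"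
      and L2: "\<forall>i<m+2*n. \<forall>j<m+2*n. i \<noteq> j \<longrightarrow> 2 * Qoff N' Q' x' i j \<le> Qplus N' Q' x' i + Qplus N' Q' x' j"
      unfolding metzler_spec_def by auto
    have "\<forall>c<n. 2 * x' ! (c+1) \<le> x' ! 0 + x' ! (N+1+c)"
    proof (intro allI impI)
      fix c assume c: "c < n"
      have "2 * Qoff N' Q' x' (m + 2*c) (m + (2*c+1)) \<le> Qplus N' Q' x' (m + 2*c) + Qplus N' Q' x' (m + (2*c+1))"
        using L2 c by auto
      moreover have "Qoff N' Q' x' (m + 2*c) (m + (2*c+1)) = x' ! (c+1)" using TO[of "2*c" "2*c+1"] c by simp
      moreover have "Qplus N' Q' x' (m + 2*c) = x' ! 0" using TP[of "2*c"] c by simp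
      moreover have "Qplus N' Q' x' (m + (2*c+1)) = x' ! (N+1+c)" using TP[of "2*c+1"] c by simp
      ultimately show "2 * x' ! (c+1) \<le> x' ! 0 + x' ! (N+1+c)" by simp
    qed
    then show "(\<forall>i<m. Qminus N' Q' x' i \<le> Qplus N' Q' x' i) \<and>
      (\<forall>i<m. \<forall>j<m. i \<noteq> j \<longrightarrow> 2 * Qoff N' Q' x' i j \<le> Qplus N' Q' x' i + Qplus N' Q' x' j) \<and>
      (\<forall>c<n. 2 * x' ! (c+1) \<le> x' ! 0 + x' ! (N+1+c))" using L1 L2 by auto
  next
    assume R: "(\<forall>i<m. Qminus N' Q' x' i \<le> Qplus N' Q' x' i) \<and>
      (\<forall>i<m. \<forall>j<m. i \<noteq> j \<longrightarrow> 2 * Qoff N' Q' x' i j \<le> Qplus N' Q' x' i + Qplus N' Q' x' j) \<and>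
      (\<forall>c<n. 2 * x' ! (c+1) \<le> x' ! 0 + x' ! (N+1+c))"
    have "\<forall>i<m+2*n. Qminus N' Q' x' i \<le> Qplus N' Q' x' i"
    proof (intro allI impI)
      fix i assume "i < m+2*n"
      show "Qminus N' Q' x' i \<le> Qplus N' Q' x' i"
      proof (cases "i < m")
        case False
        then have "i = m + (i - m)" by simp
        then show ?thesis using TM[of "i-m"] by (metis ereal_infty_less_eq(2) linorder_linear)
      qed (use R in auto)
    qed
    moreover have "\<forall>i<m+2*n. \<forall>j<m+2*n. i \<noteq> j \<longrightarrow> 2 * Qoff N' Q' x' i j \<le> Qplus N' Q' x' i + Qplus N' Q' x' j"
      using R TT by blast
    ultimately show "x' \<in> metzler_spec (m+2*n) N' Q'"
      unfolding metzler_spec_def using xs N'_def by auto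
  qed
qed

lemma ar1: "(ereal r + a \<le> ereal r + b) = (a \<le> b)"
  by (cases a; cases b) auto

lemma ar2: "(2 * (ereal r + c) \<le> (ereal r + a) + (ereal r + b)) = (2 * c \<le> a + b)"
  by (cases a; cases b; cases c) auto

lemma ar2': "(ereal 2 * (ereal r + c) \<le> (ereal r + a) + (ereal r + b)) = (ereal 2 * c \<le> a + b)"
  by (cases a; cases b; cases c) auto

lemma xprime_nth:
  assumes "length x = N" "length ts = n"
  shows "(w # map ((+) w) x @ ts) ! 0 = w"
    "c < N \<Longrightarrow> (w # map ((+) w) x @ ts) ! (c+1) = w + x ! c"
    "c < n \<Longrightarrow> (w # map ((+) w) x @ ts) ! (N+1+c) = ts ! c"
  using assms by (auto simp: nth_append)

lemma fwd_core:
  assumes fam: "metzler_family m N Q" and nN: "n \<le> N" and xs: "x \<in> tspace N" and ts: "ts \<in> tspace n"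
    and x': "x' = ereal r # map ((+) (ereal r)) x @ ts"
  shows "x' \<in> metzler_spec (m+2*n) (N+1+n) (fwdQ N m Q) \<longleftrightarrow>
    x \<in> metzler_spec m N Q \<and> (\<forall>c<n. 2 * (ereal r + x ! c) \<le> ereal r + ts ! c)"
proof -
  define N' where "N' = N+1+n"
  define Q' where "Q' = fwdQ N m Q"
  have lx: "length x = N" and fx: "\<forall>a\<in>set x. a \<noteq> \<infinity>" using tspaceD[OF xs] by auto
  have lt: "length ts = n" and ft: "\<forall>a\<in>set ts. a \<noteq> \<infinity>" using tspaceD[OF ts] by auto
  have x't: "x' \<in> tspace N'" unfolding x' N'_def tspace_def trop_def using lx lt fx ft
    by (auto simp: add_ninf)
  have fx': "\<forall>k\<le>N'. xext x' k \<noteq> \<infinity>" using xext_fin[OF x't] by auto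
  have fxx: "\<forall>k\<le>N. xext x k \<noteq> \<infinity>" using xext_fin[OF xs] by auto
  have xe: "xext x' (k+1) = ereal r + xext x k" if "k \<le> N" for k
  proof (cases k)
    case 0 then show ?thesis unfolding x' by (simp add: xext_def)
  next
    case (Suc c)
    then show ?thesis using xprime_nth(2)[OF lx lt, where w="ereal r" and c=c] that unfolding x' by (simp add: xext_def)
  qed
  have GG: "G N' Q' x' i j P = ereal r + G N Q x i j P" if "i < m" "j < m" for i j P
  proof (rule G_shift)
    show "\<forall>k\<le>N. snd (Q k i j) \<noteq> \<infinity> \<and> xext x k \<noteq> \<infinity>" using fam_fin[OF fam] that fxx by auto
    show "\<forall>k\<le>N. \<exists>k'\<le>N'. Q' k' i j = Q k i j \<and> xext x' k' = ereal r + xext x k"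
    proof (intro allI impI)
      fix k assume "k \<le> N"
      then show "\<exists>k'\<le>N'. Q' k' i j = Q k i j \<and> xext x' k' = ereal r + xext x k"
        using xe[of k] that by (intro exI[of _ "k+1"]) (auto simp: Q'_def N'_def fwdQ_def)
    qed
    show "\<forall>k'\<le>N'. Q' k' i j = Z \<or> (\<exists>k\<le>N. Q' k' i j = Q k i j \<and> xext x' k' = ereal r + xext x k)"
    proof (intro allI impI)
      fix k' assume "k' \<le> N'"
      show "Q' k' i j = Z \<or> (\<exists>k\<le>N. Q' k' i j = Q k i j \<and> xext x' k' = ereal r + xext x k)"
      proof (cases "1 \<le> k' \<and> k' \<le> N+1")
        case True
        then show ?thesis using xe[of "k'-1"] that
          by (intro disjI2 exI[of _ "k'-1"]) (auto simp: Q'_def fwdQ_def)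
      qed (use that in \<open>auto simp: Q'_def fwdQ_def\<close>)
    qed
  qed (use fx' in auto)
  have D: "Qplus N' Q' x' i = ereal r + Qplus N Q x i" "Qminus N' Q' x' i = ereal r + Qminus N Q x i"
    if "i < m" for i using GG[OF that that] by (simp_all add: Qplus_G Qminus_G)
  have O: "Qoff N' Q' x' i j = ereal r + Qoff N Q x i j" if "i < m" "j < m" for i j
    using GG[OF that] by (simp add: Qoff_G)
  have tc: "(\<forall>c<n. 2 * x' ! (c+1) \<le> x' ! 0 + x' ! (N+1+c)) \<longleftrightarrow> (\<forall>c<n. 2 * (ereal r + x ! c) \<le> ereal r + ts ! c)"
    using xprime_nth[OF lx lt, where w="ereal r"] nN unfolding x' by auto
  have c1: "(\<forall>i<m. Qminus N' Q' x' i \<le> Qplus N' Q' x' i) \<longleftrightarrow> (\<forall>i<m. Qminus N Q x i \<le> Qplus N Q x i)"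
    using D by (simp add: ar1)
  have c2: "(\<forall>i<m. \<forall>j<m. i \<noteq> j \<longrightarrow> 2 * Qoff N' Q' x' i j \<le> Qplus N' Q' x' i + Qplus N' Q' x' j)
     \<longleftrightarrow> (\<forall>i<m. \<forall>j<m. i \<noteq> j \<longrightarrow> 2 * Qoff N Q x i j \<le> Qplus N Q x i + Qplus N Q x j)"
    using D O by (simp add: ar2 ar2')
  show ?thesis
    using fwd_spec[OF fam x't[unfolded N'_def]] c1 c2 tc xs
    unfolding N'_def[symmetric] Q'_def[symmetric] metzler_spec_def by auto
qed

lemma ar3: "y \<noteq> \<infinity> \<Longrightarrow> ereal r + (y - ereal r) = y"
  by (cases y) auto


lemma decomp:
  assumes "x' \<in> tspace (N+1+n)" "x' ! 0 = ereal r"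
  shows "x' = ereal r # map ((+) (ereal r)) (map (\<lambda>a. a - ereal r) (take N (tl x'))) @ drop (N+1) x'"
proof -
  have l: "length x' = N+1+n" and f: "\<forall>a\<in>set x'. a \<noteq> \<infinity>" using tspaceD[OF assms(1)] by auto
  obtain a t where at: "x' = a # t" using l by (cases x') auto
  have a: "a = ereal r" using assms(2) at by simp
  have "map (\<lambda>b. ereal r + (b - ereal r)) (take N t) = take N t"
    by (rule map_idI) (use f at in \<open>auto dest: in_set_takeD intro: ar3\<close>)
  then have "map ((+) (ereal r)) (map (\<lambda>a. a - ereal r) (take N t)) = take N t"
    by (simp add: comp_def)
  then show ?thesis using at a by simp
qed

lemma replicate_spec:
  assumes fam: "metzler_family m N Q"
  shows "replicate (N+1+n) (-\<infinity>) \<in> metzler_spec (m+2*n) (N+1+n) (fwdQ N m Q)"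
proof -
  define x' where "x' = replicate (N+1+n) (-\<infinity>::ereal)"
  have xt: "x' \<in> tspace (N+1+n)" unfolding x'_def tspace_def trop_def by auto
  have fam': "metzler_family (m+2*n) (N+1+n) (fwdQ N m Q)" by (rule fwd_family[OF fam])
  have G0: "G (N+1+n) (fwdQ N m Q) x' i j P = -\<infinity>" if "i < m" "j < m" for i j P
  proof (rule G_minf, intro allI impI)
    fix k assume k: "k \<le> N+1+n"
    show "snd (fwdQ N m Q k i j) + xext x' k = -\<infinity>"
    proof (cases "k = 0")
      case True then show ?thesis using that by (simp add: fwdQ_def Z_def xext_def)
    next
      case False
      then have "xext x' k = -\<infinity>" using k unfolding xext_def x'_def
        by (simp del: replicate_Suc add: nth_replicate)
      moreover have "snd (fwdQ N m Q k i j) \<noteq> \<infinity>" using fam_fin[OF fam' k] that by simp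
      ultimately show ?thesis by (cases "snd (fwdQ N m Q k i j)") auto
    qed
  qed
  have "(\<forall>i<m. Qminus (N+1+n) (fwdQ N m Q) x' i \<le> Qplus (N+1+n) (fwdQ N m Q) x' i) \<and>
    (\<forall>i<m. \<forall>j<m. i \<noteq> j \<longrightarrow> 2 * Qoff (N+1+n) (fwdQ N m Q) x' i j \<le> Qplus (N+1+n) (fwdQ N m Q) x' i + Qplus (N+1+n) (fwdQ N m Q) x' j) \<and>
    (\<forall>c<n. 2 * x' ! (c+1) \<le> x' ! 0 + x' ! (N+1+c))"
    using G0 by (simp add: Qplus_G Qminus_G Qoff_G x'_def)
  then show ?thesis using fwd_spec[OF fam xt] unfolding x'_def by blast
qed

lemma proj_empty: "proj_metzler_spec d {}"
proof -
  define Q :: "nat \<Rightarrow> nat \<Rightarrow> nat \<Rightarrow> strop" where "Q = (\<lambda>k i j. if k = 0 then (-1, 0) else Z)"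
  have fam: "metzler_family 1 (d+0) Q" unfolding metzler_family_def Q_def by (auto simp: valid_strop_def Z_def)
  have "metzler_spec 1 (d+0) Q = {}"
  proof (rule ccontr)
    assume "metzler_spec 1 (d+0) Q \<noteq> {}"
    then obtain x where x: "x \<in> metzler_spec 1 (d+0) Q" by auto
    then have xt: "x \<in> tspace (d+0)" and le: "Qminus (d+0) Q x 0 \<le> Qplus (d+0) Q x 0"
      unfolding metzler_spec_def by auto
    have fx: "\<forall>k\<le>d+0. xext x k \<noteq> \<infinity>" using xext_fin[OF xt] by auto
    have "Qplus (d+0) Q x 0 = -\<infinity>" unfolding Qplus_G
      by (rule G_none) (use fx in \<open>auto simp: Q_def Z_def\<close>)
    moreover have "Qminus (d+0) Q x 0 = snd (Q 0 0 0) + xext x 0" unfolding Qminus_G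
      by (rule G_single) (use fx in \<open>auto simp: Q_def Z_def\<close>)
    ultimately show False using le by (simp add: Q_def xext_def)
  qed
  then show ?thesis unfolding proj_metzler_spec_def using fam by blast
qed

lemma fwd_thm:
  assumes fam: "metzler_family m (n+d') Q"
    and SS: "S = take n ` metzler_spec m (n+d') Q" and ne: "S \<noteq> {}" and Ssub: "S \<subseteq> tspace n"
  shows "proj_metzler_spec (n+1) (homog S)"
proof -
  define N where "N = n+d'"
  have nN: "n \<le> N" and NN: "n + 1 + (d'+n) = N+1+n" unfolding N_def by auto
  have fam': "metzler_family m N Q" using fam unfolding N_def .
  have S': "S = take n ` metzler_spec m N Q" using SS unfolding N_def .
  have "homog S = take (n+1) ` metzler_spec (m+2*n) (N+1+n) (fwdQ N m Q)"
  proof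
    show "homog S \<subseteq> take (n+1) ` metzler_spec (m+2*n) (N+1+n) (fwdQ N m Q)"
    proof
      fix p assume "p \<in> homog S"
      then obtain x0 s where p: "p = x0 # map ((+) x0) s" "trop x0" "s \<in> S" unfolding homog_def by auto
      obtain v where v: "v \<in> metzler_spec m N Q" "s = take n v" using p(3) S' by auto
      have vt: "v \<in> tspace N" using v(1) unfolding metzler_spec_def by auto
      then have lv: "length v = N" and fv: "\<forall>a\<in>set v. a \<noteq> \<infinity>" using tspaceD by auto
      have st: "s \<in> tspace n" using p(3) Ssub by auto
      show "p \<in> take (n+1) ` metzler_spec (m+2*n) (N+1+n) (fwdQ N m Q)"
      proof (cases x0)
        case (real r)
        define ts where "ts = map (\<lambda>c. 2 * (x0 + v ! c) - x0) [0..<n]"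
        have fin2: "2 * (x0 + v ! c) \<noteq> \<infinity>" if "c < n" for c
        proof -
          have "v ! c \<noteq> \<infinity>" using fv lv nN that by auto
          then show ?thesis using real by (cases "v ! c") auto
        qed
        have tst: "ts \<in> tspace n" unfolding ts_def tspace_def trop_def using fin2 real
          by (auto simp: ereal_minus_eq_PInfty_iff)
        have cond: "\<forall>c<n. 2 * (ereal r + v ! c) \<le> ereal r + ts ! c"
          unfolding ts_def using fin2 real by (simp add: ar3)
        define x' where "x' = ereal r # map ((+) (ereal r)) v @ ts"
        have "x' \<in> metzler_spec (m+2*n) (N+1+n) (fwdQ N m Q)"
          using fwd_core[OF fam' nN vt tst x'_def] v(1) cond by simp
        moreover have "take (n+1) x' = p" unfolding x'_def p(1) v(2) real using lv nN
          by (simp add: take_map)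
        ultimately show ?thesis by (metis image_eqI)
      next
        case PInf then show ?thesis using p(2) by (simp add: trop_def)
      next
        case MInf
        have "take (n+1) (replicate (N+1+n) (-\<infinity>)) = p"
        proof -
          have "map ((+) x0) s = replicate n (-\<infinity>)"
            using tspaceD[OF st] MInf by (intro nth_equalityI) (auto simp: minf_add)
          then show ?thesis using p(1) MInf nN by simp
        qed
        then show ?thesis using replicate_spec[OF fam', of n] by (metis image_eqI)
      qed
    qed
    show "take (n+1) ` metzler_spec (m+2*n) (N+1+n) (fwdQ N m Q) \<subseteq> homog S"
    proof
      fix p assume "p \<in> take (n+1) ` metzler_spec (m+2*n) (N+1+n) (fwdQ N m Q)"
      then obtain x' where x': "x' \<in> metzler_spec (m+2*n) (N+1+n) (fwdQ N m Q)" "p = take (n+1) x'" by auto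
      have xt: "x' \<in> tspace (N+1+n)" using x'(1) unfolding metzler_spec_def by auto
      then have lx: "length x' = N+1+n" and fx: "\<forall>a\<in>set x'. a \<noteq> \<infinity>" using tspaceD by auto
      have tc: "\<forall>c<n. 2 * x' ! (c+1) \<le> x' ! 0 + x' ! (N+1+c)" using fwd_spec[OF fam' xt] x'(1) by blast
      show "p \<in> homog S"
      proof (cases "x' ! 0")
        case (real r)
        define x where "x = map (\<lambda>a. a - ereal r) (take N (tl x'))"
        define ts where "ts = drop (N+1) x'"
        have xe: "x' = ereal r # map ((+) (ereal r)) x @ ts"
          unfolding x_def ts_def using decomp[OF xt real] .
        have lxx: "length x = N" unfolding x_def using lx by simp
        have xxt: "x \<in> tspace N" unfolding x_def tspace_def trop_def using lx fx
          by (cases x') (auto dest: in_set_takeD simp: ereal_minus_eq_PInfty_iff)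
        have tst: "ts \<in> tspace n" unfolding ts_def tspace_def trop_def using lx fx
          by (auto dest: in_set_dropD)
        have "x \<in> metzler_spec m N Q" using fwd_core[OF fam' nN xxt tst xe] x'(1) by simp
        then have "take n x \<in> S" using S' by auto
        moreover have "p = ereal r # map ((+) (ereal r)) (take n x)"
          using x'(2) xe lxx nN by (simp add: take_map)
        ultimately show ?thesis unfolding homog_def trop_def by auto
      next
        case PInf
        then show ?thesis using fx lx by (metis add_gr_0 nth_mem zero_less_one)
      next
        case MInf
        obtain s where s: "s \<in> S" using ne by auto
        have st: "s \<in> tspace n" using s Ssub by auto
        have "p = -\<infinity> # map ((+) (-\<infinity>)) s"
        proof (rule nth_equalityI)
          show "length p = length (-\<infinity> # map ((+) (-\<infinity>)) s)" using x'(2) lx tspaceD[OF st] by simp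
          fix k assume k: "k < length p"
          show "p ! k = (-\<infinity> # map ((+) (-\<infinity>)) s) ! k"
          proof (cases k)
            case 0 then show ?thesis using x'(2) MInf by simp
          next
            case (Suc c)
            have c: "c < n" using k Suc x'(2) lx by simp
            have "x' ! (N+1+c) \<noteq> \<infinity>" using fx lx c by simp
            then have "-\<infinity> + x' ! (N+1+c) = -\<infinity>" by (rule minf_add)
            then have "2 * x' ! (c+1) \<le> -\<infinity>" using tc c MInf by (metis)
            then have "x' ! (c+1) = -\<infinity>" by (cases "x' ! (c+1)") auto
            moreover have "s ! c \<noteq> \<infinity>" using tspaceD[OF st] c by auto
            ultimately show ?thesis using Suc x'(2) c tspaceD[OF st] by (simp add: minf_add)
          qed
        qed
        then show ?thesis using s unfolding homog_def trop_def by auto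
      qed
    qed
  qed
  then have "metzler_family (m+2*n) ((n+1)+(d'+n)) (fwdQ N m Q) \<and>
      homog S = take (n+1) ` metzler_spec (m+2*n) ((n+1)+(d'+n)) (fwdQ N m Q)"
    using fwd_family[OF fam', of n] unfolding NN by simp
  then show ?thesis unfolding proj_metzler_spec_def by blast
qed

theorem mainTheorem16:
  fixes S :: "ereal list set" and n :: nat
  assumes "S \<subseteq> tspace n" and "trop_convex S"
  shows "proj_metzler_spec n S \<longleftrightarrow> proj_metzler_spec (n + 1) (homog S)"
proof
  assume "proj_metzler_spec n S"
  then obtain d' m Q where fam: "metzler_family m (n+d') Q" and SS: "S = take n ` metzler_spec m (n+d') Q"
    unfolding proj_metzler_spec_def by blast
  show "proj_metzler_spec (n + 1) (homog S)"
  proof (cases "S = {}")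
    case True
    then have "homog S = {}" unfolding homog_def by auto
    then show ?thesis using proj_empty by simp
  next
    case False
    then show ?thesis using fwd_thm[OF fam SS False assms(1)] by simp
  qed
next
  assume "proj_metzler_spec (n + 1) (homog S)"
  then obtain d' m Q where fam: "metzler_family m (n+1+d') Q" and H: "homog S = take (n+1) ` metzler_spec m (n+1+d') Q"
    unfolding proj_metzler_spec_def by blast
  show "proj_metzler_spec n S" by (rule bwd_thm[OF fam H])
qed

end
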